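(* Let $\theta>0$, $\ell\in[m]$, and $\lambda:=\lfloor 2m/\ell\rfloor$. Consider an instance of stochastic $\mathrm{Top}_\ell$-norm load balancing on $m$ identical machines with independent nonnegative job random variables $\{X_j\}_{j\in J}$ such that $\Pr[X_j\ge\theta]=0$ for every $j$. (i) If $\sum_{j\in J}\beta_\lambda(X_j/4\theta)\le8m$, then for any assignment $\sigma$ we have $\mathbb{E}[\mathrm{Top}_\ell(\mathcal{L}^\sigma)]\le32\alpha\ell\theta$, where $\alpha:=\max\{1,\max_{i\in[m]}\sum_{j:\sigma(j)=i}\beta_\lambda(X_j/4\theta)\}$. (ii) If $\sum_{j\in J}\beta_\lambda(X_j/4\theta)>8m$, then for any assignment $\sigma$ we have $\mathbb{E}[\mathrm{Top}_\ell(\mathcal{L}^\sigma)]>\ell\theta/2$.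
   Context: For a nonnegative random variable $Z$ and $\lambda>1$, the $\lambda$-effective size is $\beta_\lambda(Z):=\log_\lambda\mathbb{E}[\lambda^Z]$ (and $\beta_1(Z):=\mathbb{E}[Z]$). An assignment $\sigma:J\to[m]$ induces the random load vector $\mathcal{L}^\sigma$ with $\mathcal{L}^\sigma_i=\sum_{j:\sigma(j)=i}X_j$. For $x\in\mathbb{R}^m_{\ge0}$, $\mathrm{Top}_\ell(x)$ is the sum of the $\ell$ largest coordinates of $x$. *)

theory Defs
  imports "HOL-Probability.Probability"
begin

definition eff_size :: "'a measure \<Rightarrow> real \<Rightarrow> ('a \<Rightarrow> real) \<Rightarrow> real" where
  "eff_size M lam Z =
     (if lam = 1 then (\<integral>\<omega>. Z \<omega> \<partial>M) else log lam (\<integral>\<omega>. lam powr (Z \<omega>) \<partial>M))"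

text \<open>Top_l(x) for x indexed by machines {..<m}: sum of the l largest coordinates,
  i.e. the maximum of the sum over any l coordinates.\<close>
definition topl :: "nat \<Rightarrow> nat \<Rightarrow> (nat \<Rightarrow> real) \<Rightarrow> real" where
  "topl m l x = Max ((\<lambda>S. \<Sum>i\<in>S. x i) ` {S. S \<subseteq> {..<m} \<and> card S = l})"

definition load :: "'j set \<Rightarrow> ('j \<Rightarrow> nat) \<Rightarrow> ('j \<Rightarrow> 'a \<Rightarrow> real) \<Rightarrow> nat \<Rightarrow> 'a \<Rightarrow> real" where
  "load J \<sigma> X i \<omega> = (\<Sum>j\<in>{j\<in>J. \<sigma> j = i}. X j \<omega>)"

end

theory Submission
  imports Defs
begin


locale LB = prob_space M for M :: "'a measure" +
  fixes X :: "'j \<Rightarrow> 'a \<Rightarrow> real" and J :: "'j set" and \<theta> lam :: real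
  assumes finJ: "finite J" and th: "\<theta> > 0" and lam2: "lam \<ge> 2"
    and ind: "indep_vars (\<lambda>_. borel) X J"
    and bnd: "\<And>j \<omega>. j \<in> J \<Longrightarrow> \<omega> \<in> space M \<Longrightarrow> 0 \<le> X j \<omega> \<and> X j \<omega> < \<theta>"
begin

lemma meas_X[measurable]: "j \<in> J \<Longrightarrow> X j \<in> borel_measurable M"
  using ind by (auto simp: indep_vars_def)

lemma indep2:
  fixes f g :: "('j \<Rightarrow> real) \<Rightarrow> real"
  assumes AB: "A \<subseteq> J" "B \<subseteq> J" "A \<inter> B = {}"
    and f: "f \<in> borel_measurable (PiM A (\<lambda>_. borel))"
    and g: "g \<in> borel_measurable (PiM B (\<lambda>_. borel))"
    and fi: "integrable M (\<lambda>\<omega>. f (restrict (\<lambda>i. X i \<omega>) A))"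
    and gi: "integrable M (\<lambda>\<omega>. g (restrict (\<lambda>i. X i \<omega>) B))"
  shows "(\<integral>\<omega>. f (restrict (\<lambda>i. X i \<omega>) A) * g (restrict (\<lambda>i. X i \<omega>) B) \<partial>M)
        = (\<integral>\<omega>. f (restrict (\<lambda>i. X i \<omega>) A) \<partial>M) * (\<integral>\<omega>. g (restrict (\<lambda>i. X i \<omega>) B) \<partial>M)"
proof -
  have "indep_var (PiM A (\<lambda>_. borel)) (\<lambda>\<omega>. restrict (\<lambda>i. X i \<omega>) A) (PiM B (\<lambda>_. borel)) (\<lambda>\<omega>. restrict (\<lambda>i. X i \<omega>) B)"
    using indep_var_restrict[OF ind AB(3,1,2)] .
  from indep_var_compose[OF this f g]
  have "indep_var borel (f \<circ> (\<lambda>\<omega>. restrict (\<lambda>i. X i \<omega>) A)) borel (g \<circ> (\<lambda>\<omega>. restrict (\<lambda>i. X i \<omega>) B))" .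
  from indep_var_lebesgue_integral[of "f \<circ> (\<lambda>\<omega>. restrict (\<lambda>i. X i \<omega>) A)" "g \<circ> (\<lambda>\<omega>. restrict (\<lambda>i. X i \<omega>) B)"] this fi gi show ?thesis by (simp add: comp_def)
qed

lemma indepfam:
  fixes F :: "'j set \<Rightarrow> ('j \<Rightarrow> real) \<Rightarrow> real"
  assumes fin: "finite BB" and disj: "\<And>A B. A \<in> BB \<Longrightarrow> B \<in> BB \<Longrightarrow> A \<noteq> B \<Longrightarrow> A \<inter> B = {}"
    and sub: "\<And>A. A \<in> BB \<Longrightarrow> A \<subseteq> J"
    and F: "\<And>A. A \<in> BB \<Longrightarrow> F A \<in> borel_measurable (PiM A (\<lambda>_. borel))"
    and Fi: "\<And>A. A \<in> BB \<Longrightarrow> integrable M (\<lambda>\<omega>. F A (restrict (\<lambda>i. X i \<omega>) A))"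
  shows "(\<integral>\<omega>. (\<Prod>A\<in>BB. F A (restrict (\<lambda>i. X i \<omega>) A)) \<partial>M)
        = (\<Prod>A\<in>BB. (\<integral>\<omega>. F A (restrict (\<lambda>i. X i \<omega>) A) \<partial>M))"
proof -
  have "indep_vars (\<lambda>A. PiM ((\<lambda>A. A) A) (\<lambda>_. borel)) (\<lambda>A \<omega>. restrict (\<lambda>i. X i \<omega>) ((\<lambda>A. A) A)) BB"
    by (rule indep_vars_restrict[OF ind]) (use sub disj in \<open>auto simp: disjoint_family_on_def\<close>)
  from indep_vars_compose2[OF this, of F "\<lambda>_. borel"] F
  have "indep_vars (\<lambda>_. borel) (\<lambda>A \<omega>. F A (restrict (\<lambda>i. X i \<omega>) A)) BB" by simp
  from indep_vars_lebesgue_integral[OF fin this] Fi show ?thesis by simp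
qed

definition Z where "Z j \<omega> = X j \<omega> / (4*\<theta>)"
definition wf where "wf G x = (\<Sum>j\<in>G. x j / (4*\<theta>))"
definition W where "W G \<omega> = (\<Sum>j\<in>G. Z j \<omega>)"
definition H where "H G \<omega> = (if 1/4 \<le> W G \<omega> then 1 else 0::real)"
definition bb where "bb j = log lam (\<integral>\<omega>. lam powr Z j \<omega> \<partial>M)"

lemma W_restrict: "W G \<omega> = wf G (restrict (\<lambda>i. X i \<omega>) G)"
  by (simp add: W_def wf_def Z_def)

lemma wf_meas[measurable]: "wf G \<in> borel_measurable (PiM G (\<lambda>_. borel))"
  unfolding wf_def by measurable

lemma Z_bnd: "j \<in> J \<Longrightarrow> \<omega> \<in> space M \<Longrightarrow> 0 \<le> Z j \<omega> \<and> Z j \<omega> < 1/4"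
  using bnd[of j \<omega>] th by (auto simp: Z_def field_simps)

lemma Z_meas[measurable]: "j \<in> J \<Longrightarrow> Z j \<in> borel_measurable M"
  unfolding Z_def by measurable

lemma W_meas[measurable]: "G \<subseteq> J \<Longrightarrow> W G \<in> borel_measurable M"
  unfolding W_def by (rule borel_measurable_sum) (auto)


lemma H_meas[measurable]: "G \<subseteq> J \<Longrightarrow> H G \<in> borel_measurable M"
  unfolding H_def using W_meas[of G] by measurable

lemma W_nonneg: "G \<subseteq> J \<Longrightarrow> \<omega> \<in> space M \<Longrightarrow> 0 \<le> W G \<omega>"
  unfolding W_def using Z_bnd by (auto intro!: sum_nonneg)

lemma W_le: "G \<subseteq> J \<Longrightarrow> \<omega> \<in> space M \<Longrightarrow> W G \<omega> \<le> real (card G)"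
proof -
  assume a: "G \<subseteq> J" "\<omega> \<in> space M"
  have "\<And>j. j \<in> G \<Longrightarrow> Z j \<omega> \<le> 1" using Z_bnd a by fastforce
  then have "W G \<omega> \<le> (\<Sum>j\<in>G. 1)" unfolding W_def
    by (intro sum_mono) auto
  then show ?thesis by simp
qed

lemma W_insert: "finite G \<Longrightarrow> j \<notin> G \<Longrightarrow> W (insert j G) \<omega> = Z j \<omega> + W G \<omega>"
  by (simp add: W_def)

lemma lam_pos: "0 < lam" and lam_ne1: "lam \<noteq> 1"
  using lam2 by auto

lemma H_01: "H G \<omega> = 0 \<or> H G \<omega> = 1"
  by (simp add: H_def)

lemma int_powW: "G \<subseteq> J \<Longrightarrow> integrable M (\<lambda>\<omega>. lam powr W G \<omega>)"
proof -
  assume G: "G \<subseteq> J"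
  show ?thesis
  proof (rule integrable_const_bound[where B="lam powr real (card G)"])
    show "AE \<omega> in M. norm (lam powr W G \<omega>) \<le> lam powr real (card G)"
      using G W_le lam2 by (auto intro!: powr_mono)
  qed (use G in measurable)
qed

lemma int_Z: "j \<in> J \<Longrightarrow> integrable M (\<lambda>\<omega>. lam powr Z j \<omega>)"
  using int_powW[of "{j}"] by (simp add: W_def)

lemma int_H: "G \<subseteq> J \<Longrightarrow> integrable M (H G)"
  by (rule integrable_const_bound[where B=1]) (auto simp: H_def)

lemma int_powWH: "G \<subseteq> J \<Longrightarrow> integrable M (\<lambda>\<omega>. lam powr W G \<omega> * H G \<omega>)"
proof -
  assume G: "G \<subseteq> J"
  show ?thesis
  proof (rule integrable_const_bound[where B="lam powr real (card G)"])
    show "AE \<omega> in M. norm (lam powr W G \<omega> * H G \<omega>) \<le> lam powr real (card G)"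
      using G W_le lam2 by (auto simp: H_def intro!: powr_mono)
  qed (use G in measurable)
qed

definition pw where "pw j = (\<integral>\<omega>. lam powr Z j \<omega> \<partial>M)"

lemma pw_ge1: "j \<in> J \<Longrightarrow> 1 \<le> pw j"
proof -
  assume j: "j \<in> J"
  have "integrable M (\<lambda>\<omega>. lam powr W {j} \<omega>)" using int_powW[of "{j}"] j by simp
  then have i: "integrable M (\<lambda>\<omega>. lam powr Z j \<omega>)" by (simp add: W_def)
  have "(\<integral>\<omega>. 1 \<partial>M) \<le> pw j" unfolding pw_def
    by (rule integral_mono[OF _ i]) (use Z_bnd[OF j] lam2 in \<open>auto intro!: ge_one_powr_ge_zero\<close>)
  then show ?thesis by (simp add: prob_space)
qed

lemma pw_eq: "j \<in> J \<Longrightarrow> pw j = lam powr bb j"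
  using pw_ge1[of j] lam2 by (simp add: bb_def pw_def[symmetric])

lemma prodE: "G \<subseteq> J \<Longrightarrow> (\<integral>\<omega>. lam powr W G \<omega> \<partial>M) = (\<Prod>j\<in>G. pw j)"
proof -
  assume G: "G \<subseteq> J"
  have fin: "finite G" using G finJ finite_subset by blast
  have iv: "indep_vars (\<lambda>_. borel) (\<lambda>j \<omega>. lam powr Z j \<omega>) G"
  proof -
    have "indep_vars (\<lambda>_. borel) (\<lambda>j \<omega>. (\<lambda>x. lam powr (x / (4*\<theta>))) (X j \<omega>)) G"
      by (rule indep_vars_compose2[OF indep_vars_subset[OF ind G]]) measurable
    then show ?thesis by (simp add: Z_def)
  qed
  have "(\<integral>\<omega>. lam powr W G \<omega> \<partial>M) = (\<integral>\<omega>. (\<Prod>j\<in>G. lam powr Z j \<omega>) \<partial>M)"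
    unfolding W_def using lam2 by (simp add: powr_sum)
  also have "\<dots> = (\<Prod>j\<in>G. pw j)" unfolding pw_def
    by (rule indep_vars_lebesgue_integral[OF fin iv])
       (use int_Z G in auto)
  finally show ?thesis .
qed

lemma EW_eq: "G \<subseteq> J \<Longrightarrow> (\<integral>\<omega>. lam powr W G \<omega> \<partial>M) = lam powr (\<Sum>j\<in>G. bb j)"
  using lam2 by (simp add: prodE pw_eq powr_sum subset_iff)


lemma EW_ge1: "G \<subseteq> J \<Longrightarrow> 1 \<le> (\<integral>\<omega>. lam powr W G \<omega> \<partial>M)"
  using prodE pw_ge1 by (simp add: subset_iff prod_ge_1)

lemma stop:
  assumes "G \<subseteq> J"
  shows "(\<integral>\<omega>. lam powr W G \<omega> * H G \<omega> \<partial>M)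
       \<le> lam powr (1/2) * (\<integral>\<omega>. H G \<omega> \<partial>M) * (\<integral>\<omega>. lam powr W G \<omega> \<partial>M)"
proof -
  have "finite G" using assms finJ finite_subset by blast
  then show ?thesis using assms
  proof (induction G rule: finite_induct)
    case empty
    show ?case by (simp add: H_def W_def)
  next
    case (insert j G)
    hence G: "G \<subseteq> J" and j: "j \<in> J" by auto
    have G': "insert j G \<subseteq> J" using insert by auto
    define a where "a = (\<integral>\<omega>. lam powr W G \<omega> * H G \<omega> \<partial>M)"
    define eh where "eh = (\<integral>\<omega>. H G \<omega> \<partial>M)"
    define eh' where "eh' = (\<integral>\<omega>. H (insert j G) \<omega> \<partial>M)"
    define e where "e = (\<integral>\<omega>. lam powr W G \<omega> \<partial>M)"
    define e' where "e' = (\<integral>\<omega>. lam powr W (insert j G) \<omega> \<partial>M)"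
    have IH: "a \<le> lam powr (1/2) * eh * e" using insert G by (simp add: a_def eh_def e_def)
    have ee: "e' = pw j * e" using prodE[OF G] prodE[OF G'] insert by (simp add: e_def e'_def)
    have e'1: "1 \<le> e'" using EW_ge1[OF G'] by (simp add: e'_def)
    have pwj: "1 \<le> pw j" using pw_ge1[OF j] .
    have Wins: "\<And>\<omega>. W (insert j G) \<omega> = Z j \<omega> + W G \<omega>" using insert W_insert by auto
    have HH: "\<And>\<omega>. \<omega> \<in> space M \<Longrightarrow> H G \<omega> \<le> H (insert j G) \<omega>"
    proof -
      fix \<omega> assume "\<omega> \<in> space M"
      then have "W G \<omega> \<le> W (insert j G) \<omega>" using Wins Z_bnd[OF j] by force
      then show "H G \<omega> \<le> H (insert j G) \<omega>" by (auto simp: H_def)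
    qed
    have ehle: "eh \<le> eh'" unfolding eh_def eh'_def
      by (rule integral_mono[OF int_H[OF G] int_H[OF G'] HH])
    have pt: "\<And>\<omega>. \<omega> \<in> space M \<Longrightarrow> lam powr W (insert j G) \<omega> * H (insert j G) \<omega>
       \<le> lam powr Z j \<omega> * (lam powr W G \<omega> * H G \<omega>) + lam powr (1/2) * (H (insert j G) \<omega> - H G \<omega>)"
    proof -
      fix \<omega> assume w: "\<omega> \<in> space M"
      show "?thesis \<omega>"
      proof (cases "1/4 \<le> W G \<omega>")
        case True
        then have "1/4 \<le> W (insert j G) \<omega>" using Wins Z_bnd[OF j w] by auto
        then show ?thesis using True by (simp add: H_def Wins powr_add)
      next
        case False
        then have h0: "H G \<omega> = 0" by (simp add: H_def)
        have "W (insert j G) \<omega> \<le> 1/2" using Wins Z_bnd[OF j w] False by auto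
        then have "lam powr W (insert j G) \<omega> \<le> lam powr (1/2)" using lam2 by (intro powr_mono) auto
        then show ?thesis using h0 by (auto simp: H_def)
      qed
    qed
    have indep: "(\<integral>\<omega>. lam powr Z j \<omega> * (lam powr W G \<omega> * H G \<omega>) \<partial>M) = pw j * a"
    proof -
      have jG: "{j} \<inter> G = {}" using insert by auto
      have m1: "(\<lambda>x. lam powr (x j / (4*\<theta>))) \<in> borel_measurable (PiM {j} (\<lambda>_. borel))" by measurable
      have m2: "(\<lambda>x. lam powr wf G x * (if 1/4 \<le> wf G x then 1 else 0::real)) \<in> borel_measurable (PiM G (\<lambda>_. borel))" by measurable
      have "(\<integral>\<omega>. (\<lambda>x. lam powr (x j / (4*\<theta>))) (restrict (\<lambda>i. X i \<omega>) {j}) *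
                 (\<lambda>x. lam powr wf G x * (if 1/4 \<le> wf G x then 1 else 0)) (restrict (\<lambda>i. X i \<omega>) G) \<partial>M)
          = (\<integral>\<omega>. (\<lambda>x. lam powr (x j / (4*\<theta>))) (restrict (\<lambda>i. X i \<omega>) {j}) \<partial>M) *
            (\<integral>\<omega>. (\<lambda>x. lam powr wf G x * (if 1/4 \<le> wf G x then 1 else 0)) (restrict (\<lambda>i. X i \<omega>) G) \<partial>M)"
      proof (rule indep2)
        show "integrable M (\<lambda>\<omega>. (\<lambda>x. lam powr (x j / (4*\<theta>))) (restrict (\<lambda>i. X i \<omega>) {j}))"
          using int_Z[OF j] by (simp add: Z_def)
        show "integrable M (\<lambda>\<omega>. (\<lambda>x. lam powr wf G x * (if 1/4 \<le> wf G x then 1 else 0)) (restrict (\<lambda>i. X i \<omega>) G))"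
          using int_powWH[OF G] by (simp add: W_restrict[symmetric] H_def)
      qed (use j G jG m1 m2 in auto)
      then show ?thesis
        by (simp add: W_restrict[symmetric] H_def Z_def pw_def a_def)
    qed
    have "(\<integral>\<omega>. lam powr W (insert j G) \<omega> * H (insert j G) \<omega> \<partial>M)
        \<le> (\<integral>\<omega>. lam powr Z j \<omega> * (lam powr W G \<omega> * H G \<omega>) + lam powr (1/2) * (H (insert j G) \<omega> - H G \<omega>) \<partial>M)"
    proof (rule integral_mono[OF int_powWH[OF G'] _ pt])
      have "integrable M (\<lambda>\<omega>. lam powr Z j \<omega> * (lam powr W G \<omega> * H G \<omega>))"
      proof (rule integrable_const_bound[where B="lam powr (1 + real (card G))"])
        show "AE \<omega> in M. norm (lam powr Z j \<omega> * (lam powr W G \<omega> * H G \<omega>)) \<le> lam powr (1 + real (card G))"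
        proof (rule AE_I2)
          fix \<omega> assume w: "\<omega> \<in> space M"
          have "lam powr Z j \<omega> * (lam powr W G \<omega> * H G \<omega>) \<le> lam powr 1 * lam powr real (card G)"
          proof (rule mult_mono)
            show "lam powr Z j \<omega> \<le> lam powr 1" using Z_bnd[OF j w] lam2 by (intro powr_mono) auto
            show "lam powr W G \<omega> * H G \<omega> \<le> lam powr real (card G)"
              using W_le[OF G w] lam2 by (auto simp: H_def intro!: powr_mono)
          qed (auto simp: H_def)
          then show "norm (lam powr Z j \<omega> * (lam powr W G \<omega> * H G \<omega>)) \<le> lam powr (1 + real (card G))"
            by (simp add: powr_add H_def)
        qed
      qed (use j G in measurable)
      then show "integrable M (\<lambda>\<omega>. lam powr Z j \<omega> * (lam powr W G \<omega> * H G \<omega>) + lam powr (1/2) * (H (insert j G) \<omega> - H G \<omega>))"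
        using int_H[OF G] int_H[OF G'] by auto
    qed
    also have "\<dots> = pw j * a + lam powr (1/2) * (eh' - eh)"
    proof -
      have "integrable M (\<lambda>\<omega>. lam powr Z j \<omega> * (lam powr W G \<omega> * H G \<omega>))"
      proof (rule integrable_const_bound[where B="lam powr (1 + real (card G))"])
        show "AE \<omega> in M. norm (lam powr Z j \<omega> * (lam powr W G \<omega> * H G \<omega>)) \<le> lam powr (1 + real (card G))"
        proof (rule AE_I2)
          fix \<omega> assume w: "\<omega> \<in> space M"
          have "lam powr Z j \<omega> * (lam powr W G \<omega> * H G \<omega>) \<le> lam powr 1 * lam powr real (card G)"
          proof (rule mult_mono)
            show "lam powr Z j \<omega> \<le> lam powr 1" using Z_bnd[OF j w] lam2 by (intro powr_mono) auto
            show "lam powr W G \<omega> * H G \<omega> \<le> lam powr real (card G)"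
              using W_le[OF G w] lam2 by (auto simp: H_def intro!: powr_mono)
          qed (auto simp: H_def)
          then show "norm (lam powr Z j \<omega> * (lam powr W G \<omega> * H G \<omega>)) \<le> lam powr (1 + real (card G))"
            by (simp add: powr_add H_def)
        qed
      qed (use j G in measurable)
      then show ?thesis using int_H[OF G] int_H[OF G'] indep
        by (simp add: eh_def eh'_def)
    qed
    also have "\<dots> \<le> pw j * (lam powr (1/2) * eh * e) + lam powr (1/2) * ((eh' - eh) * e')"
    proof (rule add_mono)
      show "pw j * a \<le> pw j * (lam powr (1/2) * eh * e)" using IH pwj by (intro mult_left_mono) auto
      have "eh' - eh \<le> (eh' - eh) * e'" using ehle e'1 by (simp add: mult_le_cancel_left1)
      then show "lam powr (1/2) * (eh' - eh) \<le> lam powr (1/2) * ((eh' - eh) * e')"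
        by (intro mult_left_mono) auto
    qed
    also have "\<dots> = lam powr (1/2) * eh' * e'" using ee by (simp add: algebra_simps)
    finally show ?case by (simp add: eh'_def e'_def)
  qed
qed


lemma pw_le: "j \<in> J \<Longrightarrow> pw j \<le> lam powr (1/4)"
proof -
  assume j: "j \<in> J"
  have "pw j \<le> (\<integral>\<omega>. lam powr (1/4) \<partial>M)" unfolding pw_def
  proof (rule integral_mono[OF int_Z[OF j]])
    fix \<omega> assume "\<omega> \<in> space M"
    then have "Z j \<omega> \<le> 1/4" using Z_bnd[OF j] by fastforce
    then show "lam powr Z j \<omega> \<le> lam powr (1/4)" using lam2 by (intro powr_mono) auto
  qed simp
  then show ?thesis by (simp add: prob_space)
qed

lemma bb_bnd: "j \<in> J \<Longrightarrow> 0 \<le> bb j \<and> bb j \<le> 1/4"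
proof -
  assume j: "j \<in> J"
  have l1: "1 < lam" using lam2 by simp
  have "lam powr 0 \<le> lam powr bb j" using pw_ge1[OF j] pw_eq[OF j] by simp
  then have "0 \<le> bb j" using powr_le_cancel_iff[OF l1] by blast
  moreover have "lam powr bb j \<le> lam powr (1/4)" using pw_le[OF j] pw_eq[OF j] by simp
  then have "bb j \<le> 1/4" using powr_le_cancel_iff[OF l1] by blast
  ultimately show ?thesis by simp
qed

lemma bundle_prob:
  assumes G: "G \<subseteq> J" and B: "1 \<le> (\<Sum>j\<in>G. bb j)"
  shows "lam powr (-1/2) * (1 - lam powr (-3/4)) \<le> (\<integral>\<omega>. H G \<omega> \<partial>M)"
proof -
  define e where "e = (\<integral>\<omega>. lam powr W G \<omega> \<partial>M)"
  define eh where "eh = (\<integral>\<omega>. H G \<omega> \<partial>M)"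
  have e_ge: "lam \<le> e" unfolding e_def EW_eq[OF G]
    using powr_mono[OF B, of lam] lam2 by simp
  have epos: "0 < e" using e_ge lam2 by simp
  have pt: "\<And>\<omega>. \<omega> \<in> space M \<Longrightarrow> lam powr W G \<omega> \<le> lam powr (1/4) + lam powr W G \<omega> * H G \<omega>"
  proof -
    fix \<omega> assume "\<omega> \<in> space M"
    show "lam powr W G \<omega> \<le> lam powr (1/4) + lam powr W G \<omega> * H G \<omega>"
    proof (cases "1/4 \<le> W G \<omega>")
      case True then show ?thesis by (simp add: H_def)
    next
      case False
      then have "lam powr W G \<omega> \<le> lam powr (1/4)" using lam2 by (intro powr_mono) auto
      then show ?thesis using False by (simp add: H_def)
    qed
  qed
  have "e \<le> (\<integral>\<omega>. lam powr (1/4) + lam powr W G \<omega> * H G \<omega> \<partial>M)" unfolding e_def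
    by (rule integral_mono[OF int_powW[OF G] _ pt]) (use int_powWH[OF G] in auto)
  also have "\<dots> = lam powr (1/4) + (\<integral>\<omega>. lam powr W G \<omega> * H G \<omega> \<partial>M)"
    using int_powWH[OF G] by (simp add: prob_space)
  also have "\<dots> \<le> lam powr (1/4) + lam powr (1/2) * eh * e"
    using stop[OF G] by (simp add: e_def eh_def)
  finally have A: "e \<le> lam powr (1/4) + lam powr (1/2) * eh * e" .
  then have "1 \<le> lam powr (1/4) / e + lam powr (1/2) * eh" using epos
    by (simp add: field_simps)
  moreover have "lam powr (1/4) / e \<le> lam powr (1/4) / lam"
    using e_ge lam2 by (intro divide_left_mono) auto
  moreover have "lam powr (1/4) / lam = lam powr (-3/4)"
  proof -
    have "lam powr (-3/4) = lam powr (1/4 - 1)" by simp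
    also have "\<dots> = lam powr (1/4) / lam powr 1" by (rule powr_diff)
    finally show ?thesis using lam2 by simp
  qed
  ultimately have C: "1 - lam powr (-3/4) \<le> lam powr (1/2) * eh" by linarith
  have "lam powr (-1/2) * (1 - lam powr (-3/4)) \<le> lam powr (-1/2) * (lam powr (1/2) * eh)"
    using C by (intro mult_left_mono) auto
  also have "\<dots> = (lam powr (-1/2) * lam powr (1/2)) * eh" by simp
  also have "lam powr (-1/2) * lam powr (1/2) = 1" using lam2 by (simp add: powr_add[symmetric])
  finally show ?thesis by (simp add: eh_def)
qed

end



lemma pick_sub:
  fixes b :: "'j \<Rightarrow> real"
  assumes "finite G" "\<And>j. j \<in> G \<Longrightarrow> 0 \<le> b j \<and> b j \<le> 1/4" "1 \<le> sum b G"
  shows "\<exists>H\<subseteq>G. 1 \<le> sum b H \<and> sum b H \<le> 5/4"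
  using assms
proof (induction G rule: finite_induct)
  case empty then show ?case by simp
next
  case (insert j G)
  show ?case
  proof (cases "1 \<le> sum b G")
    case True
    then obtain H where "H \<subseteq> G" "1 \<le> sum b H \<and> sum b H \<le> 5/4" using insert by auto
    then show ?thesis by blast
  next
    case False
    have "b j \<le> 1/4" using insert by auto
    moreover have "sum b (insert j G) = b j + sum b G" using insert by simp
    ultimately have "sum b (insert j G) \<le> 5/4" using False by linarith
    then show ?thesis using insert by blast
  qed
qed

lemma bundle_exist:
  fixes b :: "'j \<Rightarrow> real" and c :: "'j \<Rightarrow> nat"
  assumes "finite G" "\<forall>j\<in>G. 0 \<le> b j \<and> b j \<le> 1/4"
  shows "\<exists>BB. BB \<subseteq> Pow G \<and> finite BB \<and> (\<forall>A\<in>BB. \<forall>B\<in>BB. A \<noteq> B \<longrightarrow> A \<inter> B = {})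
     \<and> (\<forall>A\<in>BB. 1 \<le> sum b A \<and> (\<forall>j\<in>A. \<forall>k\<in>A. c j = c k))
     \<and> sum b G \<le> 5/4 * card BB + card (c ` G)"
  using assms
proof (induction "card G" arbitrary: G rule: less_induct)
  case less
  show ?case
  proof (cases "\<exists>i. 1 \<le> sum b {j\<in>G. c j = i}")
    case False
    have "sum b G = (\<Sum>i\<in>c ` G. sum b {j\<in>G. c j = i})"
      by (rule sum.image_gen) (use less in auto)
    also have "\<dots> \<le> (\<Sum>i\<in>c ` G. 1)" using False by (intro sum_mono) (auto simp: not_le less_imp_le)
    finally have "sum b G \<le> card (c ` G)" by simp
    then show ?thesis by (intro exI[of _ "{}"]) auto
  next
    case True
    then obtain i where i: "1 \<le> sum b {j\<in>G. c j = i}" by blast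
    obtain H where H: "H \<subseteq> {j\<in>G. c j = i}" "1 \<le> sum b H" "sum b H \<le> 5/4"
      using pick_sub[OF _ _ i] less by auto
    have Hne: "H \<noteq> {}" using H by auto
    have HG: "H \<subseteq> G" using H by auto
    have fG: "finite G" using less by auto
    have cardlt: "card (G - H) < card G"
    proof (rule psubset_card_mono[OF fG])
      show "G - H \<subset> G" using Hne HG by blast
    qed
    have fD: "finite (G - H)" using fG by auto
    have bD: "\<forall>j\<in>G - H. 0 \<le> b j \<and> b j \<le> 1/4" using less(3) by auto
    have ex: "\<exists>BB\<subseteq>Pow (G - H). finite BB \<and> (\<forall>A\<in>BB. \<forall>B\<in>BB. A \<noteq> B \<longrightarrow> A \<inter> B = {}) \<and>
      (\<forall>A\<in>BB. 1 \<le> sum b A \<and> (\<forall>j\<in>A. \<forall>k\<in>A. c j = c k)) \<and>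
      sum b (G - H) \<le> 5 / 4 * real (card BB) + real (card (c ` (G - H)))"
      using less(1)[OF cardlt fD bD] by (simp only: Ball_def)
    obtain BB where BBall: "BB \<subseteq> Pow (G - H) \<and> (finite BB \<and> (\<forall>A\<in>BB. \<forall>B\<in>BB. A \<noteq> B \<longrightarrow> A \<inter> B = {}) \<and>
      (\<forall>A\<in>BB. 1 \<le> sum b A \<and> (\<forall>j\<in>A. \<forall>k\<in>A. c j = c k)) \<and>
      sum b (G - H) \<le> 5 / 4 * real (card BB) + real (card (c ` (G - H))))"
      using ex by fast
    note BB = BBall[THEN conjunct1] BBall[THEN conjunct2, THEN conjunct1]
      BBall[THEN conjunct2, THEN conjunct2, THEN conjunct1]
      BBall[THEN conjunct2, THEN conjunct2, THEN conjunct2, THEN conjunct1]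
      BBall[THEN conjunct2, THEN conjunct2, THEN conjunct2, THEN conjunct2]
    have HnB: "H \<notin> BB" using BB(1) Hne HG by blast
    have disj: "\<forall>A\<in>insert H BB. \<forall>B\<in>insert H BB. A \<noteq> B \<longrightarrow> A \<inter> B = {}"
      using BB(1,3) by blast
    have "sum b G = sum b H + sum b (G - H)"
      using sum.subset_diff[OF HG fG, of b] by linarith
    also have "\<dots> \<le> 5/4 + (5/4 * card BB + card (c ` (G - H)))" using H BB by linarith
    also have "card (c ` (G - H)) \<le> card (c ` G)" using fG by (intro card_mono) auto
    then have "5/4 + (5/4 * card BB + card (c ` (G - H))) \<le> 5/4 * card (insert H BB) + card (c ` G)"
    proof -
      have "real (card (c ` (G - H))) \<le> real (card (c ` G))" using \<open>card (c ` (G - H)) \<le> card (c ` G)\<close> by simp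
      moreover have "real (card (insert H BB)) = real (card BB) + 1" using HnB BB(2) by simp
      ultimately show ?thesis by linarith
    qed
    finally have cnt: "sum b G \<le> 5/4 * card (insert H BB) + card (c ` G)" .
    have mono: "\<forall>A\<in>insert H BB. 1 \<le> sum b A \<and> (\<forall>j\<in>A. \<forall>k\<in>A. c j = c k)"
    proof
      fix A assume "A \<in> insert H BB"
      then show "1 \<le> sum b A \<and> (\<forall>j\<in>A. \<forall>k\<in>A. c j = c k)"
      proof
        assume "A = H"
        then show ?thesis using H(1,2) by auto
      next
        assume "A \<in> BB"
        then show ?thesis using BB(4) by blast
      qed
    qed
    have sub: "insert H BB \<subseteq> Pow G" using BB(1) HG by auto
    show ?thesis
      by (rule exI[of _ "insert H BB"]) (intro conjI sub disj mono cnt finite.insertI BB(2))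
  qed
qed




lemma topl_ge: "S \<subseteq> {..<m} \<Longrightarrow> card S = l \<Longrightarrow> sum x S \<le> topl m l x"
  unfolding topl_def by (rule Max_ge) (auto intro: finite_subset[of _ "Pow {..<m}"])

lemma topl_le:
  assumes "l \<le> m" "\<And>S. S \<subseteq> {..<m} \<Longrightarrow> card S = l \<Longrightarrow> sum x S \<le> B"
  shows "topl m l x \<le> B"
  unfolding topl_def
proof (subst Max_le_iff)
  show "finite ((\<lambda>S. sum x S) ` {S. S \<subseteq> {..<m} \<and> card S = l})"
    by (auto intro: finite_subset[of _ "Pow {..<m}"])
  have "{..<l} \<in> {S. S \<subseteq> {..<m} \<and> card S = l}" using assms by auto
  then show "(\<lambda>S. sum x S) ` {S. S \<subseteq> {..<m} \<and> card S = l} \<noteq> {}" by blast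
qed (use assms in auto)

lemma topl_upper:
  fixes x :: "nat \<Rightarrow> real"
  assumes "l \<le> m"
  shows "topl m l x \<le> l * a + (\<Sum>i<m. max 0 (x i - a))"
proof (rule topl_le[OF assms])
  fix S assume S: "S \<subseteq> {..<m}" "card S = l"
  have "sum x S \<le> (\<Sum>i\<in>S. a + max 0 (x i - a))" by (intro sum_mono) auto
  also have "\<dots> = l * a + (\<Sum>i\<in>S. max 0 (x i - a))" using S by (simp add: sum.distrib)
  also have "(\<Sum>i\<in>S. max 0 (x i - a)) \<le> (\<Sum>i<m. max 0 (x i - a))"
    using S by (intro sum_mono2) auto
  finally show "sum x S \<le> l * a + (\<Sum>i<m. max 0 (x i - a))" by simp
qed

lemma topl_count:
  fixes x :: "nat \<Rightarrow> real" and n :: "nat \<Rightarrow> nat"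
  assumes lm: "l \<le> m" and xn: "\<And>i. i < m \<Longrightarrow> t * real (n i) \<le> x i" and t: "0 \<le> t"
    and x0: "\<And>i. i < m \<Longrightarrow> 0 \<le> x i"
  shows "t * min (\<Sum>i<m. n i) l \<le> topl m l x"
proof -
  define C where "C = {i. i < m \<and> 1 \<le> n i}"
  have Cs: "C \<subseteq> {..<m}" and fC: "finite C" by (auto simp: C_def)
  show ?thesis
  proof (cases "l \<le> card C")
    case True
    then obtain S where S: "S \<subseteq> C" "card S = l" by (meson obtain_subset_with_card_n)
    have "t * real l = (\<Sum>i\<in>S. t)" using S by simp
    also have "\<dots> \<le> (\<Sum>i\<in>S. x i)"
    proof (intro sum_mono)
      fix i assume "i \<in> S"
      then have "i < m" "1 \<le> n i" using S by (auto simp: C_def)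
      moreover have "t * 1 \<le> t * real (n i)" using \<open>1 \<le> n i\<close> t by (intro mult_left_mono) auto
      ultimately show "t \<le> x i" using xn[of i] by simp
    qed
    also have "\<dots> \<le> topl m l x" using S Cs by (intro topl_ge) auto
    finally show ?thesis using t by (smt (verit, best) mult_left_mono of_nat_min min.cobounded2 of_nat_le_iff)
  next
    case False
    have "l - card C \<le> card ({..<m} - C)" using Cs lm fC by (simp add: card_Diff_subset)
    then obtain T where T: "T \<subseteq> {..<m} - C" "card T = l - card C" by (meson obtain_subset_with_card_n)
    define S where "S = C \<union> T"
    have Ss: "S \<subseteq> {..<m}" using T Cs by (auto simp: S_def)
    have cS: "card S = l" unfolding S_def using T False fC
      by (subst card_Un_disjoint) (auto intro: finite_subset)
    have "t * real (\<Sum>i<m. n i) = (\<Sum>i<m. t * real (n i))" by (simp add: sum_distrib_left)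
    also have "\<dots> = (\<Sum>i\<in>C. t * real (n i))"
      by (rule sum.mono_neutral_right) (auto simp: C_def)
    also have "\<dots> \<le> (\<Sum>i\<in>C. x i)" using xn Cs by (intro sum_mono) auto
    also have "\<dots> \<le> (\<Sum>i\<in>S. x i)" using x0 Ss by (intro sum_mono2) (auto simp: S_def intro: finite_subset)
    also have "\<dots> \<le> topl m l x" using Ss cS by (intro topl_ge) auto
    finally show ?thesis using t by (smt (verit, best) mult_left_mono of_nat_min min.cobounded1 of_nat_le_iff)
  qed
qed




locale LBm = LB M X J \<theta> lam for M :: "'a measure" and X :: "'j \<Rightarrow> 'a \<Rightarrow> real" and J \<theta> lam +
  fixes \<sigma> :: "'j \<Rightarrow> nat" and m l :: nat
  assumes lm: "1 \<le> l" "l \<le> m" and sig: "\<And>j. j \<in> J \<Longrightarrow> \<sigma> j < m"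
    and lamdef: "lam = real (2 * m div l)"
begin

definition Ji where "Ji i = {j\<in>J. \<sigma> j = i}"

lemma Ji_sub: "Ji i \<subseteq> J" by (auto simp: Ji_def)

lemma load_W: "load J \<sigma> X i \<omega> = 4 * \<theta> * W (Ji i) \<omega>"
  using th by (simp add: load_def W_def Z_def Ji_def sum_distrib_left)

lemma m_le: "real m \<le> real l * lam"
proof -
  have "2 * m = (2 * m div l) * l + 2 * m mod l" by simp
  moreover have "2 * m mod l < l" using lm by auto
  ultimately have "m \<le> (2 * m div l) * l" using lm by linarith
  then show ?thesis unfolding lamdef by (metis of_nat_le_iff of_nat_mult mult.commute)
qed

lemma load_meas[measurable]: "(\<lambda>\<omega>. load J \<sigma> X i \<omega>) \<in> borel_measurable M"
  unfolding load_W using W_meas[OF Ji_sub] by measurable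

lemma load_nonneg: "\<omega> \<in> space M \<Longrightarrow> 0 \<le> load J \<sigma> X i \<omega>"
  unfolding load_W using W_nonneg[OF Ji_sub] th by auto

lemma load_le: "\<omega> \<in> space M \<Longrightarrow> load J \<sigma> X i \<omega> \<le> 4 * \<theta> * real (card J)"
proof -
  assume w: "\<omega> \<in> space M"
  have "W (Ji i) \<omega> \<le> real (card (Ji i))" using W_le[OF Ji_sub w] .
  also have "\<dots> \<le> real (card J)" using finJ Ji_sub by (simp add: card_mono)
  finally show ?thesis unfolding load_W using th by simp
qed

lemma topl_meas[measurable]: "(\<lambda>\<omega>. topl m l (\<lambda>i. load J \<sigma> X i \<omega>)) \<in> borel_measurable M"
  unfolding topl_def
  by (rule borel_measurable_Max) (auto intro: finite_subset[of _ "Pow {..<m}"])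

lemma topl_bnd: "\<omega> \<in> space M \<Longrightarrow> \<bar>topl m l (\<lambda>i. load J \<sigma> X i \<omega>)\<bar> \<le> real m * (4 * \<theta> * real (card J))"
proof -
  assume w: "\<omega> \<in> space M"
  have "0 \<le> (\<Sum>i<l. load J \<sigma> X i \<omega>)" using load_nonneg[OF w] by (auto intro: sum_nonneg)
  also have "\<dots> \<le> topl m l (\<lambda>i. load J \<sigma> X i \<omega>)" using lm by (intro topl_ge) auto
  finally have lo: "0 \<le> topl m l (\<lambda>i. load J \<sigma> X i \<omega>)" .
  have "topl m l (\<lambda>i. load J \<sigma> X i \<omega>) \<le> (\<Sum>i<m. 4 * \<theta> * real (card J))"
  proof (rule topl_le[OF lm(2)])
    fix S assume S: "S \<subseteq> {..<m}" "card S = l"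
    have "sum (\<lambda>i. load J \<sigma> X i \<omega>) S \<le> (\<Sum>i<m. load J \<sigma> X i \<omega>)"
      using S load_nonneg[OF w] by (intro sum_mono2) auto
    also have "\<dots> \<le> (\<Sum>i<m. 4 * \<theta> * real (card J))" using load_le[OF w] by (intro sum_mono) auto
    finally show "sum (\<lambda>i. load J \<sigma> X i \<omega>) S \<le> (\<Sum>i<m. 4 * \<theta> * real (card J))" .
  qed
  then show ?thesis using lo by simp
qed

lemma topl_int: "integrable M (\<lambda>\<omega>. topl m l (\<lambda>i. load J \<sigma> X i \<omega>))"
  by (rule integrable_const_bound[where B="real m * (4 * \<theta> * real (card J))"]) (use topl_bnd in auto)

lemma pos_part_le: "max 0 y \<le> lam powr y / ln lam"
proof -
  have lp: "0 < ln lam" using lam2 by auto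
  have "y * ln lam \<le> exp (y * ln lam)" using exp_ge_add_one_self[of "y * ln lam"] by linarith
  also have "\<dots> = lam powr y" using lam2 by (simp add: powr_def)
  finally have "y \<le> lam powr y / ln lam" using lp by (simp add: field_simps)
  moreover have "0 \<le> lam powr y / ln lam" using lp by simp
  ultimately show ?thesis by simp
qed

theorem part1:
  assumes a1: "1 \<le> \<alpha>" and a2: "\<And>i. i < m \<Longrightarrow> (\<Sum>j\<in>Ji i. bb j) \<le> \<alpha>"
  shows "(\<integral>\<omega>. topl m l (\<lambda>i. load J \<sigma> X i \<omega>) \<partial>M) \<le> 32 * \<alpha> * l * \<theta>"
proof -
  define a where "a = 4 * \<theta> * (\<alpha> + 1)"
  have lp: "0 < ln lam" using lam2 by auto
  define f where "f i \<omega> = 4 * \<theta> / ln lam * lam powr (- \<alpha> - 1) * lam powr W (Ji i) \<omega>" for i \<omega>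
  have pt: "topl m l (\<lambda>i. load J \<sigma> X i \<omega>) \<le> l * a + (\<Sum>i<m. f i \<omega>)" for \<omega>
  proof -
    have "topl m l (\<lambda>i. load J \<sigma> X i \<omega>) \<le> l * a + (\<Sum>i<m. max 0 (load J \<sigma> X i \<omega> - a))"
      by (rule topl_upper[OF lm(2)])
    also have "(\<Sum>i<m. max 0 (load J \<sigma> X i \<omega> - a)) \<le> (\<Sum>i<m. f i \<omega>)"
    proof (intro sum_mono)
      fix i
      have "max 0 (load J \<sigma> X i \<omega> - a) = 4 * \<theta> * max 0 (W (Ji i) \<omega> - \<alpha> - 1)"
      proof -
        have e: "load J \<sigma> X i \<omega> - a = 4 * \<theta> * (W (Ji i) \<omega> - \<alpha> - 1)"
          unfolding load_W a_def by (simp add: algebra_simps)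
        have "max 0 (4 * \<theta> * y) = 4 * \<theta> * max 0 y" for y
          using th by (simp add: max_def zero_le_mult_iff)
        then show ?thesis using e by simp
      qed
      also have "\<dots> \<le> 4 * \<theta> * (lam powr (W (Ji i) \<omega> - \<alpha> - 1) / ln lam)"
        using th pos_part_le by (intro mult_left_mono) auto
      also have "\<dots> = f i \<omega>" unfolding f_def
      proof -
        have "lam powr (W (Ji i) \<omega> - \<alpha> - 1) = lam powr (- \<alpha> - 1) * lam powr W (Ji i) \<omega>"
          by (simp add: powr_add[symmetric] algebra_simps)
        then show "4 * \<theta> * (lam powr (W (Ji i) \<omega> - \<alpha> - 1) / ln lam) =
            4 * \<theta> / ln lam * lam powr (- \<alpha> - 1) * lam powr W (Ji i) \<omega>" by simp
      qed
      finally show "max 0 (load J \<sigma> X i \<omega> - a) \<le> f i \<omega>" .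
    qed
    finally show ?thesis by simp
  qed
  have fint: "integrable M (f i)" for i
    unfolding f_def using int_powW[OF Ji_sub] by auto
  have Ef: "(\<integral>\<omega>. f i \<omega> \<partial>M) \<le> 4 * \<theta> / (lam * ln lam)" if i: "i < m" for i
  proof -
    have "(\<integral>\<omega>. f i \<omega> \<partial>M) = 4 * \<theta> / ln lam * lam powr (- \<alpha> - 1) * lam powr (\<Sum>j\<in>Ji i. bb j)"
      unfolding f_def using EW_eq[OF Ji_sub] by simp
    also have "\<dots> = 4 * \<theta> / ln lam * lam powr ((\<Sum>j\<in>Ji i. bb j) - \<alpha> - 1)"
      by (simp add: powr_add[symmetric] algebra_simps)
    also have "\<dots> \<le> 4 * \<theta> / ln lam * lam powr (-1)"
      using a2[OF i] lam2 th lp by (intro mult_left_mono powr_mono) auto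
    also have "\<dots> = 4 * \<theta> / (lam * ln lam)" using lam2 by (simp add: powr_minus field_simps)
    finally show ?thesis .
  qed
  have "(\<integral>\<omega>. topl m l (\<lambda>i. load J \<sigma> X i \<omega>) \<partial>M) \<le> (\<integral>\<omega>. l * a + (\<Sum>i<m. f i \<omega>) \<partial>M)"
    by (rule integral_mono[OF topl_int _ pt]) (use fint in auto)
  also have "\<dots> = l * a + (\<Sum>i<m. (\<integral>\<omega>. f i \<omega> \<partial>M))"
    using fint by (simp add: prob_space)
  also have "\<dots> \<le> l * a + (\<Sum>i<m. 4 * \<theta> / (lam * ln lam))"
    using Ef by (intro add_left_mono sum_mono) auto
  also have "(\<Sum>i<m. 4 * \<theta> / (lam * ln lam)) = 4 * \<theta> * (real m / lam) / ln lam"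
    by simp
  also have "\<dots> \<le> 4 * \<theta> * real l / (1/2)"
  proof (rule frac_le)
    have "real m / lam \<le> real l" using m_le lam2 by (simp add: divide_le_eq mult.commute)
    then show "4 * \<theta> * (real m / lam) \<le> 4 * \<theta> * real l" using th by (intro mult_left_mono) auto
    have "ln 2 \<le> ln lam" using lam2 by simp
    then show "1/2 \<le> ln lam" using ln2_ge_two_thirds by linarith
  qed (use th in auto)
  also have "l * a + 4 * \<theta> * real l / (1/2) \<le> 32 * \<alpha> * l * \<theta>"
  proof -
    have "l * a + 4 * \<theta> * real l / (1/2) = \<theta> * l * (4 * \<alpha> + 12)" unfolding a_def by (simp add: algebra_simps)
    also have "\<dots> \<le> \<theta> * l * (32 * \<alpha>)" using a1 th by (intro mult_left_mono) auto
    finally show ?thesis by (simp add: algebra_simps)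
  qed
  finally show ?thesis by simp
qed

end



context LBm begin

lemma sumX: "(\<Sum>j\<in>A. X j \<omega>) = 4 * \<theta> * W A \<omega>"
  using th by (simp add: W_def Z_def sum_distrib_left)

lemma bern: "real l * (1 - (1 - 1 / real l) ^ n) \<le> min (real n) (real l)"
proof -
  have l1: "1 \<le> real l" using lm by simp
  have "1 + real n * (- 1 / real l) \<le> (1 + (- 1 / real l)) ^ n"
    by (rule Bernoulli_inequality) (use l1 in \<open>simp add: field_simps\<close>)
  then have "1 - real n / real l \<le> (1 - 1 / real l) ^ n" by simp
  then have a: "real l * (1 - (1 - 1 / real l) ^ n) \<le> real l * (real n / real l)"
    using l1 by (intro mult_left_mono) auto
  have "0 \<le> (1 - 1 / real l) ^ n" using l1 by simp
  then have b: "real l * (1 - (1 - 1 / real l) ^ n) \<le> real l" using l1 by simp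
  show ?thesis using a b l1 by simp
qed

lemma heavy_topl:
  assumes BB: "BB \<subseteq> Pow J" "finite BB" "\<forall>A\<in>BB. \<forall>B\<in>BB. A \<noteq> B \<longrightarrow> A \<inter> B = {}"
    "\<forall>A\<in>BB. 1 \<le> sum bb A \<and> (\<forall>j\<in>A. \<forall>k\<in>A. \<sigma> j = \<sigma> k)"
    and w: "\<omega> \<in> space M"
  shows "\<theta> * l * (1 - (\<Prod>A\<in>BB. 1 - H A \<omega> / l)) \<le> topl m l (\<lambda>i. load J \<sigma> X i \<omega>)"
proof -
  define HH where "HH = {A\<in>BB. 1/4 \<le> W A \<omega>}"
  define cc where "cc A = \<sigma> (SOME j. j \<in> A)" for A
  define n where "n i = card {A\<in>HH. cc A = i}" for i
  have fHH: "finite HH" using BB(2) by (simp add: HH_def)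
  have ne: "A \<noteq> {}" if "A \<in> BB" for A using BB(4) that by fastforce
  have ccA: "\<sigma> j = cc A" if "A \<in> BB" "j \<in> A" for A j
  proof -
    have "(SOME j. j \<in> A) \<in> A" using that by (meson someI)
    then show ?thesis using BB(4) that unfolding cc_def by blast
  qed
  have AJ: "A \<subseteq> J" if "A \<in> BB" for A using BB(1) that by auto
  have cc_lt: "cc A < m" if AB: "A \<in> BB" for A
  proof -
    obtain j where "j \<in> A" using ne[OF AB] by blast
    then show ?thesis using ccA[OF AB] AJ[OF AB] sig by force
  qed
  have prodeq: "(\<Prod>A\<in>BB. 1 - H A \<omega> / l) = (1 - 1 / real l) ^ card HH"
  proof -
    have "(\<Prod>A\<in>BB. 1 - H A \<omega> / l) = (\<Prod>A\<in>HH. 1 - H A \<omega> / l)"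
      by (rule prod.mono_neutral_right[OF BB(2)]) (auto simp: HH_def H_def)
    also have "\<dots> = (\<Prod>A\<in>HH. 1 - 1 / real l)" by (rule prod.cong) (auto simp: HH_def H_def)
    finally show ?thesis by simp
  qed
  have cardHH: "(\<Sum>i<m. n i) = card HH"
  proof -
    have "card HH = (\<Sum>A\<in>HH. 1)" by simp
    also have "\<dots> = (\<Sum>i\<in>cc ` HH. \<Sum>A\<in>{A\<in>HH. cc A = i}. 1)"
      by (rule sum.image_gen[OF fHH])
    also have "\<dots> = (\<Sum>i\<in>cc ` HH. n i)" by (simp add: n_def)
    also have "\<dots> = (\<Sum>i<m. n i)"
    proof (rule sum.mono_neutral_left)
      show "cc ` HH \<subseteq> {..<m}" using cc_lt by (auto simp: HH_def)
      show "\<forall>i\<in>{..<m} - cc ` HH. n i = 0"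
      proof
        fix i assume "i \<in> {..<m} - cc ` HH"
        then have "{A\<in>HH. cc A = i} = {}" by auto
        then show "n i = 0" unfolding n_def by (metis card.empty)
      qed
    qed simp
    finally show ?thesis by simp
  qed
  have xn: "\<theta> * real (n i) \<le> load J \<sigma> X i \<omega>" if i: "i < m" for i
  proof -
    define HHi where "HHi = {A\<in>HH. cc A = i}"
    have fHHi: "finite HHi" using fHH by (simp add: HHi_def)
    have sub: "\<Union>HHi \<subseteq> Ji i"
    proof
      fix j assume "j \<in> \<Union>HHi"
      then obtain A where A: "A \<in> HHi" "j \<in> A" by blast
      then have "A \<in> BB" "cc A = i" by (auto simp: HHi_def HH_def)
      then show "j \<in> Ji i" using ccA[OF _ A(2)] AJ A(2) by (auto simp: Ji_def)
    qed
    have finA: "\<forall>A\<in>HHi. finite A"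
    proof
      fix A assume "A \<in> HHi"
      then have "A \<subseteq> J" using AJ by (auto simp: HHi_def HH_def)
      then show "finite A" using finJ by (rule finite_subset)
    qed
    have disjHi: "\<forall>A\<in>HHi. \<forall>B\<in>HHi. A \<noteq> B \<longrightarrow> A \<inter> B = {}" using BB(3) by (auto simp: HHi_def HH_def)
    have "\<theta> * real (n i) = (\<Sum>A\<in>HHi. \<theta>)" by (simp add: n_def HHi_def)
    also have "\<dots> \<le> (\<Sum>A\<in>HHi. \<Sum>j\<in>A. X j \<omega>)"
    proof (rule sum_mono)
      fix A assume "A \<in> HHi"
      then have "1/4 \<le> W A \<omega>" by (simp add: HHi_def HH_def)
      then show "\<theta> \<le> (\<Sum>j\<in>A. X j \<omega>)" unfolding sumX using th by simp
    qed
    also have "\<dots> = (\<Sum>j\<in>\<Union>HHi. X j \<omega>)"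
      using sum.Union_disjoint[OF finA disjHi, of "\<lambda>j. X j \<omega>"] by (simp add: comp_def)
    also have "\<dots> \<le> (\<Sum>j\<in>Ji i. X j \<omega>)"
    proof (rule sum_mono2)
      show "finite (Ji i)" using finJ Ji_sub finite_subset by blast
      show "\<And>j. j \<in> Ji i - \<Union>HHi \<Longrightarrow> 0 \<le> X j \<omega>" using bnd w Ji_sub by blast
    qed (rule sub)
    also have "\<dots> = load J \<sigma> X i \<omega>" by (simp add: load_def Ji_def)
    finally show ?thesis .
  qed
  have "\<theta> * real (min (\<Sum>i<m. n i) l) \<le> topl m l (\<lambda>i. load J \<sigma> X i \<omega>)"
    by (rule topl_count[OF lm(2)]) (use xn th load_nonneg[OF w] in auto)
  then have t1: "\<theta> * real (min (card HH) l) \<le> topl m l (\<lambda>i. load J \<sigma> X i \<omega>)"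
    using cardHH by simp
  have "\<theta> * l * (1 - (\<Prod>A\<in>BB. 1 - H A \<omega> / l)) \<le> \<theta> * min (real (card HH)) (real l)"
    unfolding prodeq mult.assoc using bern th by (intro mult_left_mono) auto
  also have "\<dots> = \<theta> * real (min (card HH) l)" by (simp add: of_nat_min)
  finally show ?thesis using t1 by linarith
qed


lemma lam_le2m: "real l * lam \<le> 2 * real m"
proof -
  have "(2 * m div l) * l \<le> 2 * m" by (rule div_times_less_eq_dividend)
  then have "real ((2 * m div l) * l) \<le> real (2 * m)" by (simp only: of_nat_le_iff)
  then show ?thesis unfolding lamdef by (simp add: mult.commute)
qed

theorem part2:
  assumes S: "8 * real m < (\<Sum>j\<in>J. bb j)"
  shows "real l * \<theta> / 2 < (\<integral>\<omega>. topl m l (\<lambda>i. load J \<sigma> X i \<omega>) \<partial>M)"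
proof -
  have bbJ: "\<forall>j\<in>J. 0 \<le> bb j \<and> bb j \<le> 1/4" using bb_bnd by auto
  have ex: "\<exists>BB. BB \<subseteq> Pow J \<and> finite BB \<and> (\<forall>A\<in>BB. \<forall>B\<in>BB. A \<noteq> B \<longrightarrow> A \<inter> B = {})
     \<and> (\<forall>A\<in>BB. 1 \<le> sum bb A \<and> (\<forall>j\<in>A. \<forall>k\<in>A. \<sigma> j = \<sigma> k))
     \<and> sum bb J \<le> 5/4 * card BB + card (\<sigma> ` J)"
    by (rule bundle_exist[OF finJ bbJ])
  obtain BB where BBall: "BB \<subseteq> Pow J \<and> finite BB \<and> (\<forall>A\<in>BB. \<forall>B\<in>BB. A \<noteq> B \<longrightarrow> A \<inter> B = {})
     \<and> (\<forall>A\<in>BB. 1 \<le> sum bb A \<and> (\<forall>j\<in>A. \<forall>k\<in>A. \<sigma> j = \<sigma> k))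
     \<and> sum bb J \<le> 5/4 * card BB + card (\<sigma> ` J)"
    using ex by fast
  note BB = BBall[THEN conjunct1] BBall[THEN conjunct2, THEN conjunct1]
      BBall[THEN conjunct2, THEN conjunct2, THEN conjunct1]
      BBall[THEN conjunct2, THEN conjunct2, THEN conjunct2, THEN conjunct1]
      BBall[THEN conjunct2, THEN conjunct2, THEN conjunct2, THEN conjunct2]
  have AJ: "A \<subseteq> J" if "A \<in> BB" for A using BB(1) that by auto
  have cm: "card (\<sigma> ` J) \<le> m"
  proof -
    have "card (\<sigma> ` J) \<le> card {..<m}" using sig by (intro card_mono) auto
    then show ?thesis by simp
  qed
  have cardBB: "28/5 * real m \<le> real (card BB)"
  proof -
    have "real (card (\<sigma> ` J)) \<le> real m" using cm by simp
    then show ?thesis using S BB(5) by linarith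
  qed
  define p where "p = lam powr (-1/2) * (1 - lam powr (-3/4))"
  define q where "q A = (\<integral>\<omega>. H A \<omega> \<partial>M)" for A
  have qp: "p \<le> q A" if "A \<in> BB" for A
    unfolding p_def q_def by (rule bundle_prob) (use that AJ BB(4) in auto)
  have q01: "0 \<le> q A \<and> q A \<le> 1" if "A \<in> BB" for A
  proof -
    have "0 \<le> q A" unfolding q_def by (rule integral_nonneg_AE) (auto simp: H_def)
    moreover have "q A \<le> (\<integral>\<omega>. 1 \<partial>M)" unfolding q_def
      by (rule integral_mono[OF int_H[OF AJ[OF that]]]) (auto simp: H_def)
    ultimately show ?thesis by (simp add: prob_space)
  qed
  define Q where "Q = (\<Sum>A\<in>BB. q A)"
  have QQ: "real (card BB) * p \<le> Q"
  proof -
    have "(\<Sum>A\<in>BB. p) \<le> Q" unfolding Q_def using qp by (intro sum_mono) auto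
    then show ?thesis by simp
  qed
  define s where "s = sqrt lam"
  have s14: "1.4 \<le> s" unfolding s_def using lam2 by (intro real_le_rsqrt) (simp add: power2_eq_square)
  have ss: "s * s = lam" unfolding s_def using lam2 by simp
  have sp: "0 < s" using s14 by simp
  have h1: "lam powr (-1/2) = 1 / s"
  proof -
    have "lam powr (-1/2) * lam powr (1/2) = 1" using lam2 by (simp add: powr_add[symmetric])
    moreover have "lam powr (1/2) = s" unfolding s_def using lam2 by (simp add: powr_half_sqrt)
    ultimately show ?thesis using sp by (simp add: field_simps)
  qed
  have h2: "lam powr (-3/4) \<le> 1 / s"
  proof -
    have "lam powr (-3/4) \<le> lam powr (-1/2)" using lam2 by (intro powr_mono) auto
    then show ?thesis using h1 by simp
  qed
  have p0: "(s - 1) / (s * s) \<le> p"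
  proof -
    have "(s - 1) / (s * s) = (1 / s) * (1 - 1 / s)" using sp by (simp add: field_simps)
    also have "\<dots> \<le> (1 / s) * (1 - lam powr (-3/4))" using h2 sp by (intro mult_left_mono) auto
    finally show ?thesis unfolding p_def h1 .
  qed
  have p0nn: "0 \<le> (s - 1) / (s * s)" using s14 by simp
  have l1: "1 \<le> real l" using lm by simp
  have "real l * (s * s) \<le> 2 * real m" using lam_le2m ss by simp
  have Qbig: "1.1 * real l \<le> Q"
  proof -
    have "1.1 * real l \<le> 14/5 * real l * (s - 1)"
    proof -
      have "1.1 * real l \<le> 14/5 * real l * 0.4" using l1 by simp
      also have "\<dots> \<le> 14/5 * real l * (s - 1)" using s14 l1 by (intro mult_left_mono) auto
      finally show ?thesis .
    qed
    also have "14/5 * real l * (s - 1) = 28/5 * (real l * (s * s) / 2) * ((s - 1) / (s * s))"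
      using sp by (simp add: field_simps)
    also have "\<dots> \<le> 28/5 * real m * ((s - 1) / (s * s))"
    proof (rule mult_right_mono[OF _ p0nn])
      show "28/5 * (real l * (s * s) / 2) \<le> 28/5 * real m"
        using \<open>real l * (s * s) \<le> 2 * real m\<close> by linarith
    qed
    also have "\<dots> \<le> real (card BB) * ((s - 1) / (s * s))"
      using cardBB p0nn by (intro mult_right_mono) auto
    also have "\<dots> \<le> real (card BB) * p" using p0 by (intro mult_left_mono) auto
    also have "\<dots> \<le> Q" by (rule QQ)
    finally show ?thesis .
  qed
  define F where "F A x = 1 - (if 1/4 \<le> wf A x then 1 else 0) / real l" for A and x :: "'j \<Rightarrow> real"
  have Feq: "F A (restrict (\<lambda>i. X i \<omega>) A) = 1 - H A \<omega> / real l" for A \<omega>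
    by (simp add: F_def H_def W_restrict)
  have Fm: "F A \<in> borel_measurable (PiM A (\<lambda>_. borel))" for A
    unfolding F_def by measurable
  have Hl_int: "integrable M (\<lambda>\<omega>. 1 - H A \<omega> / real l)" if "A \<in> BB" for A
    using int_H[OF AJ[OF that]] by auto
  have EP: "(\<integral>\<omega>. (\<Prod>A\<in>BB. 1 - H A \<omega> / real l) \<partial>M) = (\<Prod>A\<in>BB. 1 - q A / real l)"
  proof -
    have "(\<integral>\<omega>. (\<Prod>A\<in>BB. F A (restrict (\<lambda>i. X i \<omega>) A)) \<partial>M)
        = (\<Prod>A\<in>BB. (\<integral>\<omega>. F A (restrict (\<lambda>i. X i \<omega>) A) \<partial>M))"
    proof (rule indepfam[OF BB(2)])
      show "\<And>A B. A \<in> BB \<Longrightarrow> B \<in> BB \<Longrightarrow> A \<noteq> B \<Longrightarrow> A \<inter> B = {}" using BB(3) by blast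
      show "\<And>A. A \<in> BB \<Longrightarrow> A \<subseteq> J" by (rule AJ)
      show "\<And>A. A \<in> BB \<Longrightarrow> F A \<in> borel_measurable (PiM A (\<lambda>_. borel))" by (rule Fm)
      show "\<And>A. A \<in> BB \<Longrightarrow> integrable M (\<lambda>\<omega>. F A (restrict (\<lambda>i. X i \<omega>) A))"
        unfolding Feq by (rule Hl_int)
    qed
    also have "\<dots> = (\<Prod>A\<in>BB. 1 - q A / real l)"
    proof (rule prod.cong[OF refl])
      fix A assume A: "A \<in> BB"
      show "(\<integral>\<omega>. F A (restrict (\<lambda>i. X i \<omega>) A) \<partial>M) = 1 - q A / real l"
        unfolding Feq q_def using int_H[OF AJ[OF A]] by (simp add: prob_space)
    qed
    finally show ?thesis unfolding Feq .
  qed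
  have prodle: "(\<Prod>A\<in>BB. 1 - q A / real l) \<le> 1 / 2.1"
  proof -
    have "(\<Prod>A\<in>BB. 1 - q A / real l) \<le> (\<Prod>A\<in>BB. exp (- (q A / real l)))"
    proof (rule prod_mono)
      fix A assume A: "A \<in> BB"
      have "q A / real l \<le> 1" using q01[OF A] l1 by (simp add: divide_le_eq)
      moreover have "1 + (- (q A / real l)) \<le> exp (- (q A / real l))" by (rule exp_ge_add_one_self)
      ultimately show "0 \<le> 1 - q A / real l \<and> 1 - q A / real l \<le> exp (- (q A / real l))" by simp
    qed
    also have "\<dots> = exp (\<Sum>A\<in>BB. - (q A / real l))" by (simp add: exp_sum[OF BB(2)])
    also have "(\<Sum>A\<in>BB. - (q A / real l)) = - (Q / real l)"
      unfolding Q_def by (simp add: sum_negf sum_divide_distrib)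
    also have "exp (- (Q / real l)) = 1 / exp (Q / real l)" by (simp add: exp_minus')
    also have "\<dots> \<le> 1 / (1 + Q / real l)"
    proof (rule divide_left_mono)
      show "1 + Q / real l \<le> exp (Q / real l)" by (rule exp_ge_add_one_self)
      have "1.1 \<le> Q / real l" using Qbig l1 by (simp add: le_divide_eq)
      then have "0 < 1 + Q / real l" by linarith
      then show "0 < exp (Q / real l) * (1 + Q / real l)" by simp
    qed simp
    also have "\<dots> \<le> 1 / 2.1"
    proof (rule divide_left_mono)
      have "1.1 \<le> Q / real l" using Qbig l1 by (simp add: le_divide_eq)
      then show "2.1 \<le> 1 + Q / real l" by linarith
      then show "0 < (1 + Q / real l) * 2.1" by simp
    qed simp
    finally show ?thesis .
  qed
  have Pint: "integrable M (\<lambda>\<omega>. \<Prod>A\<in>BB. 1 - H A \<omega> / real l)"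
  proof (rule integrable_const_bound[where B=1])
    show "AE \<omega> in M. norm (\<Prod>A\<in>BB. 1 - H A \<omega> / real l) \<le> 1"
    proof (rule AE_I2)
      fix \<omega>
      have fa: "0 \<le> 1 - H A \<omega> / real l \<and> 1 - H A \<omega> / real l \<le> 1" for A
        using l1 by (auto simp: H_def)
      have "0 \<le> (\<Prod>A\<in>BB. 1 - H A \<omega> / real l)" using fa by (intro prod_nonneg) auto
      moreover have "(\<Prod>A\<in>BB. 1 - H A \<omega> / real l) \<le> 1" using fa by (intro prod_le_1) auto
      ultimately show "norm (\<Prod>A\<in>BB. 1 - H A \<omega> / real l) \<le> 1" by simp
    qed
    show "(\<lambda>\<omega>. \<Prod>A\<in>BB. 1 - H A \<omega> / real l) \<in> borel_measurable M"
      by (rule borel_measurable_prod) (use H_meas[OF AJ] in measurable)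
  qed
  have "(\<integral>\<omega>. \<theta> * l * (1 - (\<Prod>A\<in>BB. 1 - H A \<omega> / real l)) \<partial>M)
      \<le> (\<integral>\<omega>. topl m l (\<lambda>i. load J \<sigma> X i \<omega>) \<partial>M)"
    by (rule integral_mono[OF _ topl_int heavy_topl[OF BB(1-4)]]) (use Pint in auto)
  moreover have "(\<integral>\<omega>. \<theta> * l * (1 - (\<Prod>A\<in>BB. 1 - H A \<omega> / real l)) \<partial>M)
      = \<theta> * l * (1 - (\<Prod>A\<in>BB. 1 - q A / real l))"
    using Pint EP by (simp add: prob_space)
  moreover have "real l * \<theta> / 2 < \<theta> * l * (1 - (\<Prod>A\<in>BB. 1 - q A / real l))"
  proof -
    have "1/2 < 1 - (\<Prod>A\<in>BB. 1 - q A / real l)" using prodle by simp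
    then have "\<theta> * l * (1/2) < \<theta> * l * (1 - (\<Prod>A\<in>BB. 1 - q A / real l))"
      using th l1 by (intro mult_strict_left_mono) auto
    then show ?thesis by (simp add: mult.commute)
  qed
  ultimately show ?thesis by linarith
qed

end


theorem lemma13:
  fixes M :: "'a measure" and X :: "'j \<Rightarrow> 'a \<Rightarrow> real" and J :: "'j set"
    and \<sigma> :: "'j \<Rightarrow> nat" and m l :: nat and \<theta> :: real
  assumes "prob_space M"
    and "\<theta> > 0"
    and "l \<in> {1..m}"
    and "finite J"
    and "\<And>j. j \<in> J \<Longrightarrow> X j \<in> borel_measurable M"
    and "prob_space.indep_vars M (\<lambda>_. borel) X J"
    and "\<And>j. j \<in> J \<Longrightarrow> AE \<omega> in M. X j \<omega> \<ge> 0"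
    and "\<And>j. j \<in> J \<Longrightarrow> measure M {\<omega> \<in> space M. X j \<omega> \<ge> \<theta>} = 0"
    and "\<And>j. j \<in> J \<Longrightarrow> \<sigma> j \<in> {..<m}"
  shows "let lam = real (2 * m div l);
             b = (\<lambda>j. eff_size M lam (\<lambda>\<omega>. X j \<omega> / (4 * \<theta>)));
             \<alpha> = max 1 (Max ((\<lambda>i. \<Sum>j\<in>{j\<in>J. \<sigma> j = i}. b j) ` {..<m}));
             ETop = (\<integral>\<omega>. topl m l (\<lambda>i. load J \<sigma> X i \<omega>) \<partial>M)
         in ((\<Sum>j\<in>J. b j) \<le> 8 * m \<longrightarrow> ETop \<le> 32 * \<alpha> * l * \<theta>)
          \<and> ((\<Sum>j\<in>J. b j) > 8 * m \<longrightarrow> ETop > l * \<theta> / 2)"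
proof -
  interpret P: prob_space M by (rule assms(1))
  define lam where "lam = real (2 * m div l)"
  have lm: "1 \<le> l" "l \<le> m" using assms(3) by auto
  have lam2: "2 \<le> lam"
  proof -
    have "2 * l \<le> 2 * m" using lm by simp
    then have "2 * l div l \<le> 2 * m div l" by (rule div_le_mono)
    then have "2 \<le> 2 * m div l" using lm by simp
    then show ?thesis unfolding lam_def by simp
  qed
  define X' where "X' j \<omega> = (if 0 \<le> X j \<omega> \<and> X j \<omega> < \<theta> then X j \<omega> else 0)" for j \<omega>
  have Xm[measurable]: "j \<in> J \<Longrightarrow> X j \<in> borel_measurable M" for j by (rule assms(5))
  have AEj: "AE \<omega> in M. X' j \<omega> = X j \<omega>" if j: "j \<in> J" for j
  proof -
    have "emeasure M {\<omega> \<in> space M. \<theta> \<le> X j \<omega>} = 0"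
      using assms(8)[OF j] by (simp add: P.emeasure_eq_measure)
    then have "AE \<omega> in M. \<not> \<theta> \<le> X j \<omega>"
      by (subst AE_iff_measurable[OF _ refl]) (use j in measurable)
    then show ?thesis using assms(7)[OF j] by eventually_elim (auto simp: X'_def)
  qed
  have AEall: "AE \<omega> in M. \<forall>j\<in>J. X' j \<omega> = X j \<omega>"
    using AEj assms(4) by (subst AE_finite_all) auto
  have ind': "P.indep_vars (\<lambda>_. borel) X' J"
  proof -
    have "P.indep_vars (\<lambda>_. borel) (\<lambda>j \<omega>. (\<lambda>x. if 0 \<le> x \<and> x < \<theta> then x else 0) (X j \<omega>)) J"
      by (rule P.indep_vars_compose2[OF assms(6)]) measurable
    moreover have "X' = (\<lambda>j \<omega>. (\<lambda>x. if 0 \<le> x \<and> x < \<theta> then x else 0) (X j \<omega>))"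
      by (auto simp: X'_def fun_eq_iff)
    ultimately show ?thesis by simp
  qed
  interpret L: LBm M X' J \<theta> lam \<sigma> m l
  proof
    show "finite J" by (rule assms(4))
    show "0 < \<theta>" by (rule assms(2))
    show "2 \<le> lam" by (rule lam2)
    show "P.indep_vars (\<lambda>_. borel) X' J" by (rule ind')
    show "\<And>j \<omega>. j \<in> J \<Longrightarrow> \<omega> \<in> space M \<Longrightarrow> 0 \<le> X' j \<omega> \<and> X' j \<omega> < \<theta>"
      using assms(2) by (auto simp: X'_def)
    show "1 \<le> l" "l \<le> m" by (rule lm(1), rule lm(2))
    show "\<And>j. j \<in> J \<Longrightarrow> \<sigma> j < m" using assms(9) by auto
    show "lam = real (2 * m div l)" by (rule lam_def)
  qed
  have X'm[measurable]: "j \<in> J \<Longrightarrow> X' j \<in> borel_measurable M" for j by (rule L.meas_X)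
  define b where "b j = eff_size M lam (\<lambda>\<omega>. X j \<omega> / (4 * \<theta>))" for j
  have bb_eq: "b j = L.bb j" if j: "j \<in> J" for j
  proof -
    have "(\<integral>\<omega>. lam powr (X j \<omega> / (4 * \<theta>)) \<partial>M) = (\<integral>\<omega>. lam powr L.Z j \<omega> \<partial>M)"
    proof (rule integral_cong_AE)
      show "AE \<omega> in M. lam powr (X j \<omega> / (4 * \<theta>)) = lam powr L.Z j \<omega>"
        using AEj[OF j] by eventually_elim (simp add: L.Z_def)
    qed (use j L.Z_meas[OF j] in measurable)
    then show ?thesis using lam2 by (simp add: b_def eff_size_def L.bb_def)
  qed
  have Etop: "(\<integral>\<omega>. topl m l (\<lambda>i. load J \<sigma> X i \<omega>) \<partial>M) = (\<integral>\<omega>. topl m l (\<lambda>i. load J \<sigma> X' i \<omega>) \<partial>M)"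
  proof (rule integral_cong_AE)
    show "(\<lambda>\<omega>. topl m l (\<lambda>i. load J \<sigma> X i \<omega>)) \<in> borel_measurable M"
      unfolding topl_def load_def
      by (rule borel_measurable_Max) (auto intro: finite_subset[of _ "Pow {..<m}"])
    show "(\<lambda>\<omega>. topl m l (\<lambda>i. load J \<sigma> X' i \<omega>)) \<in> borel_measurable M" by (rule L.topl_meas)
    show "AE \<omega> in M. topl m l (\<lambda>i. load J \<sigma> X i \<omega>) = topl m l (\<lambda>i. load J \<sigma> X' i \<omega>)"
      using AEall
    proof eventually_elim
      case (elim \<omega>)
      then have "load J \<sigma> X i \<omega> = load J \<sigma> X' i \<omega>" for i by (auto simp: load_def)
      then show ?case by simp
    qed
  qed
  have sumeq: "(\<Sum>j\<in>{j\<in>J. \<sigma> j = i}. b j) = (\<Sum>j\<in>L.Ji i. L.bb j)" for i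
    unfolding L.Ji_def by (rule sum.cong) (auto simp: bb_eq)
  have sumJ: "(\<Sum>j\<in>J. b j) = (\<Sum>j\<in>J. L.bb j)" by (rule sum.cong) (auto simp: bb_eq)
  define \<alpha> where "\<alpha> = max 1 (Max ((\<lambda>i. \<Sum>j\<in>{j\<in>J. \<sigma> j = i}. b j) ` {..<m}))"
  have a1: "1 \<le> \<alpha>" by (simp add: \<alpha>_def)
  have a2: "(\<Sum>j\<in>L.Ji i. L.bb j) \<le> \<alpha>" if i: "i < m" for i
  proof -
    have "(\<Sum>j\<in>{j\<in>J. \<sigma> j = i}. b j) \<le> Max ((\<lambda>i. \<Sum>j\<in>{j\<in>J. \<sigma> j = i}. b j) ` {..<m})"
      by (rule Max_ge) (use i in auto)
    then show ?thesis unfolding \<alpha>_def sumeq by simp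
  qed
  show ?thesis
    unfolding Let_def lam_def[symmetric] b_def[symmetric] \<alpha>_def[symmetric] Etop
  proof (intro conjI impI)
    show "(\<integral>\<omega>. topl m l (\<lambda>i. load J \<sigma> X' i \<omega>) \<partial>M) \<le> 32 * \<alpha> * real l * \<theta>"
      by (rule L.part1[OF a1 a2])
  next
    assume A: "(\<Sum>j\<in>J. b j) > 8 * m"
    have "8 * real m < (\<Sum>j\<in>J. L.bb j)" using A sumJ by simp
    then have "real l * \<theta> / 2 < (\<integral>\<omega>. topl m l (\<lambda>i. load J \<sigma> X' i \<omega>) \<partial>M)"
      by (rule L.part2)
    then show "(\<integral>\<omega>. topl m l (\<lambda>i. load J \<sigma> X' i \<omega>) \<partial>M) > l * \<theta> / 2" by simp
  qed
qed

end
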